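(* Let $\tilde L$ be a minimum-size counterexample. If $x$ is doubly irreducible in $\tilde L$, then $|{\uparrow}x|=\frac{|\tilde L|+1}{2}$.
   Context: For a poset $P$, $x$ upper covers $y$ (and $y$ lower covers $x$) if $y<x$ with nothing strictly between. Join-irreducible: upper covers exactly one element; meet-irreducible: lower covers exactly one element; doubly irreducible: both. For $x\in P$, ${\uparrow}x=\{y\in P: x\le y\}$. A counterexample is a finite lattice $L$ with $|L|>1$ in which every join-irreducible $j$ satisfies $|{\uparrow}j|>|L|/2$; a minimum-size counterexample is a counterexample $\tilde L$ such that no counterexample has fewer elements. *)

theory Defs
  imports Main
begin

definition is_lattice :: "'a set \<Rightarrow> ('a \<Rightarrow> 'a \<Rightarrow> bool) \<Rightarrow> bool" where
  "is_lattice A le \<longleftrightarrow>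
     (\<forall>x\<in>A. le x x) \<and>
     (\<forall>x\<in>A. \<forall>y\<in>A. le x y \<and> le y x \<longrightarrow> x = y) \<and>
     (\<forall>x\<in>A. \<forall>y\<in>A. \<forall>z\<in>A. le x y \<and> le y z \<longrightarrow> le x z) \<and>
     (\<forall>x\<in>A. \<forall>y\<in>A. \<exists>s\<in>A. le x s \<and> le y s \<and> (\<forall>u\<in>A. le x u \<and> le y u \<longrightarrow> le s u)) \<and>
     (\<forall>x\<in>A. \<forall>y\<in>A. \<exists>m\<in>A. le m x \<and> le m y \<and> (\<forall>u\<in>A. le u x \<and> le u y \<longrightarrow> le u m))"

definition covers :: "'a set \<Rightarrow> ('a \<Rightarrow> 'a \<Rightarrow> bool) \<Rightarrow> 'a \<Rightarrow> 'a \<Rightarrow> bool" where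
  "covers A le x y \<longleftrightarrow> x \<in> A \<and> y \<in> A \<and> le y x \<and> y \<noteq> x \<and>
     \<not> (\<exists>z\<in>A. le y z \<and> z \<noteq> y \<and> le z x \<and> z \<noteq> x)"

definition join_irreducible :: "'a set \<Rightarrow> ('a \<Rightarrow> 'a \<Rightarrow> bool) \<Rightarrow> 'a \<Rightarrow> bool" where
  "join_irreducible A le x \<longleftrightarrow> x \<in> A \<and> card {y\<in>A. covers A le x y} = 1"

definition meet_irreducible :: "'a set \<Rightarrow> ('a \<Rightarrow> 'a \<Rightarrow> bool) \<Rightarrow> 'a \<Rightarrow> bool" where
  "meet_irreducible A le x \<longleftrightarrow> x \<in> A \<and> card {y\<in>A. covers A le y x} = 1"

definition doubly_irreducible :: "'a set \<Rightarrow> ('a \<Rightarrow> 'a \<Rightarrow> bool) \<Rightarrow> 'a \<Rightarrow> bool" where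
  "doubly_irreducible A le x \<longleftrightarrow> join_irreducible A le x \<and> meet_irreducible A le x"

definition up_set :: "'a set \<Rightarrow> ('a \<Rightarrow> 'a \<Rightarrow> bool) \<Rightarrow> 'a \<Rightarrow> 'a set" where
  "up_set A le x = {y\<in>A. le x y}"

definition counterexample :: "'a set \<Rightarrow> ('a \<Rightarrow> 'a \<Rightarrow> bool) \<Rightarrow> bool" where
  "counterexample A le \<longleftrightarrow> finite A \<and> is_lattice A le \<and> card A > 1 \<and>
     (\<forall>j. join_irreducible A le j \<longrightarrow> 2 * card (up_set A le j) > card A)"

text \<open>Minimality is tested against all lattices carried by subsets of the same type;
  since the type contains |A| elements, every smaller finite lattice is isomorphic to one of these.\<close>
definition min_counterexample :: "'a set \<Rightarrow> ('a \<Rightarrow> 'a \<Rightarrow> bool) \<Rightarrow> bool" where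
  "min_counterexample A le \<longleftrightarrow> counterexample A le \<and>
     (\<forall>B (le' :: 'a \<Rightarrow> 'a \<Rightarrow> bool). counterexample B le' \<longrightarrow> card A \<le> card B)"

end

theory Submission
  imports Defs
begin

lemma cover_below:
  assumes fin: "finite L"
    and refl: "\<forall>x\<in>L. le x x"
    and anti: "\<forall>x\<in>L. \<forall>y\<in>L. le x y \<and> le y x \<longrightarrow> x = y"
    and trans: "\<forall>x\<in>L. \<forall>y\<in>L. \<forall>z\<in>L. le x y \<and> le y z \<longrightarrow> le x z"
    and a: "a \<in> L" and y: "y \<in> L" and ay: "le a y" "a \<noteq> y"
  shows "\<exists>c\<in>L. covers L le y c \<and> le a c"
proof -
  define S where "S = {z\<in>L. le a z \<and> le z y \<and> z \<noteq> y}"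
  define f where "f z = card {w\<in>L. le z w}" for z
  have "a \<in> S" using a ay refl unfolding S_def by auto
  then obtain c where cS: "c \<in> S" and cmin: "\<forall>z. z \<in> S \<longrightarrow> f c \<le> f z"
    using ex_has_least_nat[of "\<lambda>z. z \<in> S" a f] by blast
  have "covers L le y c"
    unfolding covers_def
  proof (intro conjI)
    show "\<not> (\<exists>z\<in>L. le c z \<and> z \<noteq> c \<and> le z y \<and> z \<noteq> y)"
    proof
      assume "\<exists>z\<in>L. le c z \<and> z \<noteq> c \<and> le z y \<and> z \<noteq> y"
      then obtain z where z: "z\<in>L" "le c z" "z \<noteq> c" "le z y" "z \<noteq> y" by blast
      have "z \<in> S" using z cS trans a unfolding S_def by blast
      have sub: "{w\<in>L. le z w} \<subset> {w\<in>L. le c w}"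
      proof
        show "{w\<in>L. le z w} \<subseteq> {w\<in>L. le c w}" using z cS trans unfolding S_def by blast
        have "c \<notin> {w\<in>L. le z w}" using z cS anti unfolding S_def by blast
        moreover have "c \<in> {w\<in>L. le c w}" using cS refl unfolding S_def by blast
        ultimately show "{w\<in>L. le z w} \<noteq> {w\<in>L. le c w}" by blast
      qed
      have "f z < f c" unfolding f_def by (rule psubset_card_mono) (use fin sub in auto)
      with cmin \<open>z \<in> S\<close> show False by fastforce
    qed
  qed (insert cS y, auto simp: S_def)
  thus ?thesis using cS unfolding S_def by blast
qed

lemma covers_flip: "covers L (\<lambda>p q. le q p) a c = covers L le c a"
  unfolding covers_def by auto

lemma cover_above:
  assumes fin: "finite L"
    and refl: "\<forall>x\<in>L. le x x"
    and anti: "\<forall>x\<in>L. \<forall>y\<in>L. le x y \<and> le y x \<longrightarrow> x = y"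
    and trans: "\<forall>x\<in>L. \<forall>y\<in>L. \<forall>z\<in>L. le x y \<and> le y z \<longrightarrow> le x z"
    and a: "a \<in> L" and y: "y \<in> L" and ay: "le a y" "a \<noteq> y"
  shows "\<exists>c\<in>L. covers L le c a \<and> le c y"
proof -
  have "\<exists>c\<in>L. covers L (\<lambda>p q. le q p) a c \<and> le c y"
  proof (rule cover_below[of L "\<lambda>p q. le q p" y a])
    show "\<forall>x\<in>L. \<forall>y\<in>L. le y x \<and> le x y \<longrightarrow> x = y" using anti by blast
    show "\<forall>x\<in>L. \<forall>y\<in>L. \<forall>z\<in>L. le y x \<and> le z y \<longrightarrow> le z x" using trans by blast
  qed (use fin refl a y ay in auto)
  thus ?thesis using covers_flip[of L le] by blast
qed

theorem lemma2p5:
  fixes L :: "'a set" and le :: "'a \<Rightarrow> 'a \<Rightarrow> bool" and x :: 'a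
  assumes "min_counterexample L le"
    and "doubly_irreducible L le x"
  shows "2 * card (up_set L le x) = card L + 1"
proof -
  have fin: "finite L" and lat: "is_lattice L le" and cL: "card L > 1"
    and JI: "\<And>j. join_irreducible L le j \<Longrightarrow> 2 * card (up_set L le j) > card L"
    using assms(1) unfolding min_counterexample_def counterexample_def by auto
  have mini: "\<And>(B::'a set) (le'::'a \<Rightarrow> 'a \<Rightarrow> bool). counterexample B le' \<Longrightarrow> card L \<le> card B"
    using assms(1) unfolding min_counterexample_def by blast
  note refl = lat[unfolded is_lattice_def, THEN conjunct1]
  note anti = lat[unfolded is_lattice_def, THEN conjunct2, THEN conjunct1]
  note trans = lat[unfolded is_lattice_def, THEN conjunct2, THEN conjunct2, THEN conjunct1]
  note joins = lat[unfolded is_lattice_def, THEN conjunct2, THEN conjunct2, THEN conjunct2, THEN conjunct1]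
  note meets = lat[unfolded is_lattice_def, THEN conjunct2, THEN conjunct2, THEN conjunct2, THEN conjunct2]
  have xL: "x \<in> L" using assms(2) unfolding doubly_irreducible_def join_irreducible_def by auto
  have hx: "2 * card (up_set L le x) > card L"
    using JI assms(2) unfolding doubly_irreducible_def by auto
  obtain d where d: "{y\<in>L. covers L le x y} = {d}"
    using assms(2) unfolding doubly_irreducible_def join_irreducible_def
    by (metis card_1_singleton_iff One_nat_def)
  obtain u where u: "{y\<in>L. covers L le y x} = {u}"
    using assms(2) unfolding doubly_irreducible_def meet_irreducible_def
    by (metis card_1_singleton_iff One_nat_def)
  have dc: "covers L le x d" and dL: "d \<in> L" using d by auto
  have uc: "covers L le u x" and uL: "u \<in> L" using u by auto
  have dU: "\<And>c. c \<in> L \<Longrightarrow> covers L le x c \<Longrightarrow> c = d" using d by blast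
  have uU: "\<And>c. c \<in> L \<Longrightarrow> covers L le c x \<Longrightarrow> c = u" using u by blast
  define L' where "L' = L - {x}"
  have finL': "finite L'" using fin unfolding L'_def by auto
  have cardL': "card L' = card L - 1" unfolding L'_def using xL fin by simp
  have lat': "is_lattice L' le"
    unfolding is_lattice_def
  proof (intro conjI)
    show "\<forall>x\<in>L'. le x x" using refl unfolding L'_def by auto
    show "\<forall>x\<in>L'. \<forall>y\<in>L'. le x y \<and> le y x \<longrightarrow> x = y" using anti unfolding L'_def by auto
    show "\<forall>x\<in>L'. \<forall>y\<in>L'. \<forall>z\<in>L'. le x y \<and> le y z \<longrightarrow> le x z" using trans unfolding L'_def by auto
    show "\<forall>a\<in>L'. \<forall>b\<in>L'. \<exists>s\<in>L'. le a s \<and> le b s \<and> (\<forall>v\<in>L'. le a v \<and> le b v \<longrightarrow> le s v)"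
    proof (intro ballI)
      fix a b assume a: "a \<in> L'" and b: "b \<in> L'"
      obtain s where s: "s\<in>L" "le a s" "le b s" "\<forall>v\<in>L. le a v \<and> le b v \<longrightarrow> le s v"
        using joins a b unfolding L'_def by blast
      have "s \<noteq> x"
      proof
        assume sx: "s = x"
        obtain c where "c \<in> L" "covers L le x c" "le a c"
          using cover_below[OF fin refl anti trans, of a x] a s sx xL unfolding L'_def by blast
        hence ad: "le a d" using dU by blast
        obtain c' where "c' \<in> L" "covers L le x c'" "le b c'"
          using cover_below[OF fin refl anti trans, of b x] b s sx xL unfolding L'_def by blast
        hence bd: "le b d" using dU by blast
        have "le x d" using s sx ad bd dL by blast
        thus False using dc anti xL dL unfolding covers_def by blast
      qed
      thus "\<exists>s\<in>L'. le a s \<and> le b s \<and> (\<forall>v\<in>L'. le a v \<and> le b v \<longrightarrow> le s v)"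
        using s unfolding L'_def by blast
    qed
    show "\<forall>a\<in>L'. \<forall>b\<in>L'. \<exists>s\<in>L'. le s a \<and> le s b \<and> (\<forall>v\<in>L'. le v a \<and> le v b \<longrightarrow> le v s)"
    proof (intro ballI)
      fix a b assume a: "a \<in> L'" and b: "b \<in> L'"
      obtain s where s: "s\<in>L" "le s a" "le s b" "\<forall>v\<in>L. le v a \<and> le v b \<longrightarrow> le v s"
        using meets a b unfolding L'_def by blast
      have "s \<noteq> x"
      proof
        assume sx: "s = x"
        obtain c where "c \<in> L" "covers L le c x" "le c a"
          using cover_above[OF fin refl anti trans, of x a] a s sx xL unfolding L'_def by blast
        hence ad: "le u a" using uU by blast
        obtain c' where "c' \<in> L" "covers L le c' x" "le c' b"
          using cover_above[OF fin refl anti trans, of x b] b s sx xL unfolding L'_def by blast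
        hence bd: "le u b" using uU by blast
        have "le u x" using s sx ad bd uL by blast
        thus False using uc anti xL uL unfolding covers_def by blast
      qed
      thus "\<exists>s\<in>L'. le s a \<and> le s b \<and> (\<forall>v\<in>L'. le v a \<and> le v b \<longrightarrow> le v s)"
        using s unfolding L'_def by blast
    qed
  qed
  have "d \<noteq> x" "u \<noteq> x" using dc uc unfolding covers_def by auto
  moreover have "d \<noteq> u" using dc uc anti xL unfolding covers_def by blast
  ultimately have "card {d, x, u} = 3" by auto
  moreover have "{d, x, u} \<subseteq> L" using dL xL uL by auto
  ultimately have "3 \<le> card L" using card_mono[OF fin] by metis
  hence cL'1: "card L' > 1" using cardL' by simp
  have "\<not> counterexample L' le"
  proof
    assume "counterexample L' le"
    hence "card L \<le> card L'" using mini by blast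
    thus False using cardL' cL by simp
  qed
  then obtain j where jJI: "join_irreducible L' le j"
    and jsmall: "\<not> 2 * card (up_set L' le j) > card L'"
    using finL' lat' cL'1 unfolding counterexample_def by blast
  have jL': "j \<in> L'" using jJI unfolding join_irreducible_def by auto
  hence jL: "j \<in> L" and jx: "j \<noteq> x" unfolding L'_def by auto
  have upsub: "up_set L le j \<subseteq> insert x (up_set L' le j)"
    unfolding up_set_def L'_def by auto
  have cjx: "covers L le j x"
  proof (rule ccontr)
    assume ncov: "\<not> covers L le j x"
    have eq: "{y\<in>L'. covers L' le j y} = {y\<in>L. covers L le j y}"
    proof (rule set_eqI, rule iffI)
      fix y assume "y \<in> {y\<in>L'. covers L' le j y}"
      hence y: "y \<in> L'" "covers L' le j y" by auto
      have yL: "y \<in> L" and yx: "y \<noteq> x" using y unfolding L'_def by auto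
      have "covers L le j y"
        unfolding covers_def
      proof (intro conjI)
        show "\<not> (\<exists>z\<in>L. le y z \<and> z \<noteq> y \<and> le z j \<and> z \<noteq> j)"
        proof
          assume "\<exists>z\<in>L. le y z \<and> z \<noteq> y \<and> le z j \<and> z \<noteq> j"
          then obtain z where z: "z\<in>L" "le y z" "z \<noteq> y" "le z j" "z \<noteq> j" by blast
          have zx: "z = x" using z y(2) unfolding covers_def L'_def by blast
          have "covers L le j x"
            unfolding covers_def
          proof (intro conjI)
            show "\<not> (\<exists>w\<in>L. le x w \<and> w \<noteq> x \<and> le w j \<and> w \<noteq> j)"
            proof
              assume "\<exists>w\<in>L. le x w \<and> w \<noteq> x \<and> le w j \<and> w \<noteq> j"
              then obtain w where w: "w\<in>L" "le x w" "w \<noteq> x" "le w j" "w \<noteq> j" by blast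
              have "le y w" using trans z zx w yL xL by blast
              moreover have "w \<noteq> y" using anti z zx w yL xL yx by blast
              ultimately show False using w y(2) unfolding covers_def L'_def by blast
            qed
          qed (use z zx jL xL in auto)
          thus False using ncov by blast
        qed
      qed (insert y jL yL, auto simp: covers_def)
      thus "y \<in> {y\<in>L. covers L le j y}" using yL by auto
    next
      fix y assume "y \<in> {y\<in>L. covers L le j y}"
      hence y: "y \<in> L" "covers L le j y" by auto
      hence "y \<noteq> x" using ncov by blast
      thus "y \<in> {y\<in>L'. covers L' le j y}" using y jL' unfolding covers_def L'_def by auto
    qed
    have jJIL: "join_irreducible L le j"
      using jJI eq jL unfolding join_irreducible_def by auto
    have hj: "2 * card (up_set L le j) > card L" using JI[OF jJIL] .
    have finU': "finite (up_set L' le j)" using finL' unfolding up_set_def by auto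
    have c1: "card (up_set L le j) \<le> card (up_set L' le j) + 1"
      using card_mono[OF _ upsub] finU' by (simp add: card_insert_if split: if_splits)
    show False
    proof (cases "le j x")
      case True
      have "up_set L le x \<subseteq> up_set L le j - {j}"
        using True trans anti jL xL jx unfolding up_set_def by blast
      moreover have "finite (up_set L le j)" using fin unfolding up_set_def by auto
      moreover have "j \<in> up_set L le j" using refl jL unfolding up_set_def by auto
      ultimately have "card (up_set L le x) \<le> card (up_set L le j) - 1"
        by (metis card_Diff_singleton card_mono finite_Diff)
      thus False using hx c1 jsmall cardL' cL hj by linarith
    next
      case False
      hence "up_set L le j \<subseteq> up_set L' le j" using upsub unfolding up_set_def by auto
      hence "card (up_set L le j) \<le> card (up_set L' le j)" using card_mono finU' by blast
      thus False using hj jsmall cardL' cL by linarith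
    qed
  qed
  have ju: "j = u" using uU cjx jL by blast
  have upeq: "up_set L le x = insert x (up_set L' le j)"
  proof (rule set_eqI, rule iffI)
    fix z assume "z \<in> up_set L le x"
    hence z: "z \<in> L" "le x z" unfolding up_set_def by auto
    show "z \<in> insert x (up_set L' le j)"
    proof (cases "z = x")
      case False
      then obtain c where "c \<in> L" "covers L le c x" "le c z"
        using cover_above[OF fin refl anti trans, of x z] z xL by blast
      hence "le j z" using uU ju by blast
      thus ?thesis using z False unfolding up_set_def L'_def by auto
    qed simp
  next
    fix z assume "z \<in> insert x (up_set L' le j)"
    thus "z \<in> up_set L le x"
      using refl xL trans cjx jL unfolding up_set_def L'_def covers_def by blast
  qed
  have finU': "finite (up_set L' le j)" using finL' unfolding up_set_def by auto
  have "x \<notin> up_set L' le j" unfolding up_set_def L'_def by auto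
  hence "card (up_set L le x) = card (up_set L' le j) + 1"
    using upeq finU' by simp
  thus ?thesis using hx jsmall cardL' cL by linarith
qed

end
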